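(* Let $(X,\|\cdot\|)$ be a normed linear space over $\mathbb{R}$ or $\mathbb{C}$, and let $a,x_1,\dots,x_n\in X\setminus\{0\}$ satisfy $\|x_j-a\|\le\|a\|$ for each $j\in\{1,\dots,n\}$. Then for any $p_1,\dots,p_n\ge0$ with $\sum_{j=1}^n p_j=1$, $$\frac{\big\|\sum_{j=1}^n p_jx_j\big\|}{\sum_{j=1}^n p_j\|x_j\|}\ \ge\ \frac{\|a\|-\max_{1\le j\le n}\|x_j-a\|}{2\|a\|}\ (\ge0).$$ *)

theory Defs
  imports Complex_Main
begin

end

theory Submission
  imports Defs
begin

theorem proposition2p2:
  fixes a :: "'a :: real_normed_vector"
    and x :: "nat \<Rightarrow> 'a"
    and p :: "nat \<Rightarrow> real"
    and n :: nat
  assumes "a \<noteq> 0"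
    and "\<And>j. j \<in> {1..n} \<Longrightarrow> x j \<noteq> 0"
    and "\<And>j. j \<in> {1..n} \<Longrightarrow> norm (x j - a) \<le> norm a"
    and "\<And>j. j \<in> {1..n} \<Longrightarrow> p j \<ge> 0"
    and "(\<Sum>j=1..n. p j) = 1"
  shows "norm (\<Sum>j=1..n. p j *\<^sub>R x j) / (\<Sum>j=1..n. p j * norm (x j))
           \<ge> (norm a - (MAX j\<in>{1..n}. norm (x j - a))) / (2 * norm a)
         \<and> (norm a - (MAX j\<in>{1..n}. norm (x j - a))) / (2 * norm a) \<ge> 0"
proof -
  define M where "M = (MAX j\<in>{1..n}. norm (x j - a))"
  define S where "S = (\<Sum>j=1..n. p j *\<^sub>R x j)"
  define D where "D = (\<Sum>j=1..n. p j * norm (x j))"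
  have ne: "{1..n} \<noteq> {}" using assms(5) by (cases "n = 0") auto
  have Mge: "\<And>j. j \<in> {1..n} \<Longrightarrow> norm (x j - a) \<le> M"
    unfolding M_def by (rule Max_ge) auto
  have Mle: "M \<le> norm a" unfolding M_def using ne assms(3) by (subst Max_le_iff) auto
  have na: "norm a > 0" using assms(1) by simp
  have "S - a = (\<Sum>j=1..n. p j *\<^sub>R (x j - a))"
  proof -
    have "(\<Sum>j=1..n. p j *\<^sub>R a) = a" using assms(5) by (simp flip: scaleR_left.sum)
    thus ?thesis unfolding S_def by (simp add: scaleR_diff_right sum_subtractf)
  qed
  hence "norm (S - a) \<le> (\<Sum>j=1..n. norm (p j *\<^sub>R (x j - a)))"
    using norm_sum by metis
  also have "\<dots> \<le> (\<Sum>j=1..n. p j * M)"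
    by (rule sum_mono) (use assms(4) Mge in \<open>auto intro: mult_left_mono\<close>)
  also have "\<dots> = M" by (metis sum_distrib_right assms(5) mult_1)
  finally have SM: "norm (S - a) \<le> M" .
  have Sge: "norm S \<ge> norm a - M"
    using norm_triangle_ineq2[of a S] SM by (simp add: norm_minus_commute)
  have "D \<le> (\<Sum>j=1..n. p j * (norm a + M))"
    unfolding D_def
  proof (rule sum_mono)
    fix j assume j: "j \<in> {1..n}"
    have "norm (x j) \<le> norm a + norm (x j - a)" using norm_triangle_ineq[of a "x j - a"] by simp
    also have "\<dots> \<le> norm a + M" using Mge[OF j] by simp
    finally show "p j * norm (x j) \<le> p j * (norm a + M)" using assms(4)[OF j] by (rule mult_left_mono)
  qed
  also have "\<dots> = norm a + M" by (metis sum_distrib_right assms(5) mult_1)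
  finally have D2: "D \<le> 2 * norm a" using Mle by simp
  have Dpos: "D > 0"
  proof (rule ccontr)
    assume "\<not> D > 0"
    moreover have "D \<ge> 0" unfolding D_def using assms(4) by (auto intro: sum_nonneg)
    ultimately have "D = 0" by simp
    hence "\<forall>j\<in>{1..n}. p j * norm (x j) = 0" unfolding D_def
      by (subst sum_nonneg_eq_0_iff[symmetric]) (use assms(4) in auto)
    hence "\<forall>j\<in>{1..n}. p j = 0" using assms(2) by auto
    hence "(\<Sum>j=1..n. p j) = 0" by simp
    thus False using assms(5) by simp
  qed
  have nn: "norm a - M \<ge> 0" using Mle by simp
  have "(norm a - M) / (2 * norm a) \<le> (norm a - M) / D"
    using Dpos D2 nn na by (intro divide_left_mono) auto
  also have "\<dots> \<le> norm S / D" using Sge Dpos by (intro divide_right_mono) auto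
  finally show ?thesis unfolding M_def[symmetric] S_def[symmetric] D_def[symmetric]
    using nn na by simp
qed

end
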